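(* Let $B$ be an abelian group and $f\colon\mathbb{Z}^2\to B$ a function satisfying, for all $k,l\in\mathbb{Z}$, $$f(k+1,l)+f(k,l+1)+f(k-1,l-1)=f(k-1,l)+f(k,l-1)+f(k+1,l+1).$$ Then there exist functions $\kappa,\lambda,\mu\colon\mathbb{Z}\to B$ such that $f(k,l)=\kappa(k)+\lambda(l)+\mu(k-l)$ for all $k,l\in\mathbb{Z}$. *)

theory Defs
  imports Main
begin

end

theory Submission
  imports Defs
begin

lemma const_int:
  fixes G :: "int \<Rightarrow> 'b"
  assumes "\<And>l. G (l + 1) = G l"
  shows "G l = G 0"
proof (induct l rule: int_induct[where k=0])
  case base then show ?case by simp
next
  case (step1 i) then show ?case using assms[of i] by simp
next
  case (step2 i) then show ?case using assms[of "i - 1"] by simp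
qed

lemma antideriv:
  fixes a :: "int \<Rightarrow> 'b::ab_group_add"
  shows "\<exists>A. \<forall>k. A (k + 1) = A k + a k"
proof -
  define A where "A k = (if 0 \<le> k then (\<Sum>i<nat k. a (int i))
      else - (\<Sum>i<nat (-k). a (- int i - 1)))" for k
  have "A (k + 1) = A k + a k" for k
  proof (cases "0 \<le> k")
    case True
    then have "nat (k+1) = Suc (nat k)" by simp
    then show ?thesis using True by (simp add: A_def)
  next
    case False
    show ?thesis
    proof (cases "k = -1")
      case True then show ?thesis by (simp add: A_def)
    next
      case F2: False
      then have "nat (-k) = Suc (nat (-k-1))" "nat (-(k+1)) = nat (-k-1)"
        "- int (nat (-k-1)) - 1 = k" using False by auto
      then show ?thesis using False F2 by (simp add: A_def algebra_simps)
    qed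
  qed
  then show ?thesis by blast
qed

theorem proposition8p3:
  fixes f :: "int \<Rightarrow> int \<Rightarrow> 'b::ab_group_add"
  assumes "\<And>k l. f (k + 1) l + f k (l + 1) + f (k - 1) (l - 1)
                  = f (k - 1) l + f k (l - 1) + f (k + 1) (l + 1)"
  shows "\<exists>kappa lam mu :: int \<Rightarrow> 'b. \<forall>k l. f k l = kappa k + lam l + mu (k - l)"
proof -
  define D where "D k l = f (k+1) (l+1) - f k l" for k l
  have mixed: "D k l - D (k-1) l = D k (l-1) - D (k-1) (l-1)" for k l
    using assms[of k l] unfolding D_def by (simp add: algebra_simps)
  have s1: "D k l - D k (l-1) = D 0 l - D 0 (l-1)" for k l
  proof -
    have "(\<lambda>k. D k l - D k (l-1)) k = (\<lambda>k. D k l - D k (l-1)) 0"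
    proof (rule const_int)
      fix k
      show "D (k + 1) l - D (k + 1) (l - 1) = D k l - D k (l - 1)"
        using mixed[of "k+1" l] by (simp add: algebra_simps)
    qed
    then show ?thesis by simp
  qed
  have Dform: "D k l = D k 0 + (D 0 l - D 0 0)" for k l
  proof -
    have "(\<lambda>l. D k l - D 0 l) l = (\<lambda>l. D k l - D 0 l) 0"
    proof (rule const_int)
      fix l
      show "D k (l + 1) - D 0 (l + 1) = D k l - D 0 l"
        using s1[of k "l+1"] by (simp add: algebra_simps)
    qed
    then show ?thesis by (simp add: algebra_simps)
  qed
  obtain A where A: "\<And>k. A (k + 1) = A k + D k 0" using antideriv[of "\<lambda>k. D k 0"] by blast
  obtain B where B: "\<And>l. B (l + 1) = B l + (D 0 l - D 0 0)" using antideriv[of "\<lambda>l. D 0 l - D 0 0"] by blast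
  have main: "f (d + l) l = A (d + l) + B l + (f d 0 - A d - B 0)" for d l
  proof -
    have "(\<lambda>l. f (d + l) l - A (d + l) - B l) l = (\<lambda>l. f (d + l) l - A (d + l) - B l) 0"
    proof (rule const_int)
      fix l
      have "f (d + l + 1) (l + 1) = f (d + l) l + D (d + l) l"
        unfolding D_def by simp
      then show "f (d + (l + 1)) (l + 1) - A (d + (l + 1)) - B (l + 1) =
          f (d + l) l - A (d + l) - B l"
        unfolding add.assoc[symmetric]
        by (simp only: \<open>f (d + l + 1) (l + 1) = _\<close> A[of "d+l"] B[of l] Dform[of "d+l" l])
          (simp add: algebra_simps)
    qed
    then show ?thesis by (simp add: algebra_simps)
  qed
  show ?thesis
  proof (intro exI allI)
    fix k l
    show "f k l = A k + B l + (\<lambda>d. f d 0 - A d - B 0) (k - l)"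
      using main[of "k - l" l] by simp
  qed
qed

end
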